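(* Let $p>0$ and let $X$ be a non-negative random variable which is $u^{1-p}$-insensitive, i.e. $\mathbb{P}(X>u\pm u^{1-p})\sim\mathbb{P}(X>u)$ as $u\to\infty$. Then for every constant $B>0$, $$\lim_{u\to\infty}\frac{\exp(-Bu^{p})}{\mathbb{P}(X>u)}=0.$$
   Context: $a_1(u)\sim a_2(u)$ means $a_1(u)/a_2(u)\to1$ as $u\to\infty$. *)

theory Defs
  imports "HOL-Probability.Probability"
begin

end

theory Submission
  imports Defs "HOL-Real_Asymp.Real_Asymp"
begin

lemma step_ineq:
  fixes v p :: real assumes "v \<ge> 1" "p > 0"
  shows "(v + v powr (1-p)) powr p \<ge> v powr p + p/2"
proof -
  define t where "t = v powr (-p)"
  have t0: "t > 0" using assms by (simp add: t_def)
  have "v powr p \<ge> 1" using assms by (intro ge_one_powr_ge_zero) auto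
  hence t1: "t \<le> 1" using assms unfolding t_def by (simp add: powr_minus inverse_le_1_iff)
  have vt: "v powr p * t = 1" using assms by (simp add: t_def powr_minus)
  have "v powr (1-p) = v * t" using assms by (simp add: t_def powr_diff powr_minus divide_inverse)
  hence eq: "v + v powr (1-p) = v * (1+t)" by (simp add: algebra_simps)
  have l: "ln (1+t) \<ge> t/(1+t)"
  proof -
    have "ln (1/(1+t)) \<le> 1/(1+t) - 1" using t0 by (intro ln_le_minus_one) auto
    moreover have "ln (1/(1+t)) = - ln (1+t)" using t0 by (simp add: ln_div)
    moreover have "1/(1+t) - 1 = - (t/(1+t))" using t0 by (simp add: field_simps)
    ultimately show ?thesis by linarith
  qed
  have "t/(1+t) \<ge> t/2" using t0 t1 by (intro divide_left_mono) auto
  hence l2: "ln (1+t) \<ge> t/2" using l by linarith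
  have "(1+t) powr p = exp (p * ln (1+t))" using t0 by (simp add: powr_def)
  also have "\<dots> \<ge> 1 + p * ln (1+t)" by (rule exp_ge_add_one_self)
  finally have "(1+t) powr p \<ge> 1 + p * (t/2)"
    using l2 assms(2) mult_left_mono[OF l2, of p] by linarith
  hence "v powr p * (1+t) powr p \<ge> v powr p * (1 + p*(t/2))"
    by (intro mult_left_mono) auto
  also have "v powr p * (1 + p*(t/2)) = v powr p + p/2 * (v powr p * t)" by (simp add: algebra_simps)
  finally show ?thesis using eq vt assms t0 by (simp add: powr_mult)
qed


theorem lemma5p1:
  fixes M :: "'a measure" and X :: "'a \<Rightarrow> real" and p B :: real
  assumes "prob_space M"
    and "X \<in> borel_measurable M"
    and "AE x in M. X x \<ge> 0"
    and "p > 0"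
    and "((\<lambda>u. measure M {x \<in> space M. X x > u + u powr (1 - p)}
                / measure M {x \<in> space M. X x > u}) \<longlongrightarrow> 1) at_top"
    and "((\<lambda>u. measure M {x \<in> space M. X x > u - u powr (1 - p)}
                / measure M {x \<in> space M. X x > u}) \<longlongrightarrow> 1) at_top"
    and "B > 0"
  shows "((\<lambda>u. exp (- B * u powr p) / measure M {x \<in> space M. X x > u}) \<longlongrightarrow> 0) at_top"
proof -
  interpret prob_space M by fact
  define F where "F u = measure M {x \<in> space M. X x > u}" for u
  have Fmono: "F v \<le> F u" if "u \<le> v" for u v
  proof -
    have "{x \<in> space M. X x > u} \<in> sets M" using assms(2) by measurable
    thus ?thesis unfolding F_def using that by (intro finite_measure_mono) auto
  qed
  define c where "c = p/2"
  have c0: "c > 0" using assms(4) by (simp add: c_def)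
  define q where "q = exp (- B * c / 2)"
  have q0: "q > 0" and q1: "q < 1" using assms(7) c0 by (auto simp: q_def)
  have "\<forall>\<^sub>F u in at_top. q < F (u + u powr (1-p)) / F u"
    using order_tendstoD(1)[OF assms(5) q1] by (simp add: F_def)
  moreover have "\<forall>\<^sub>F u in at_top. (1::real) \<le> u" by (rule eventually_ge_at_top)
  ultimately have "\<forall>\<^sub>F u in at_top. q < F (u + u powr (1-p)) / F u \<and> 1 \<le> u"
    by eventually_elim auto
  then obtain u0 where u0: "\<And>u. u \<ge> u0 \<Longrightarrow> q < F (u + u powr (1-p)) / F u \<and> 1 \<le> u"
    by (auto simp: eventually_at_top_linorder)
  have Fpos: "F u > 0" and Fstep: "F (u + u powr (1-p)) > q * F u" and u1: "u \<ge> 1"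
    if "u \<ge> u0" for u
  proof -
    have r: "q < F (u + u powr (1-p)) / F u" and "1 \<le> u" using u0[OF that] by auto
    have "F u \<ge> 0" by (simp add: F_def)
    moreover have "F u \<noteq> 0" using r q0 by auto
    ultimately show "F u > 0" by auto
    thus "F (u + u powr (1-p)) > q * F u" using r by (simp add: field_simps)
    show "u \<ge> 1" by fact
  qed
  define s :: "nat \<Rightarrow> real" where "s = rec_nat u0 (\<lambda>_ v. v + v powr (1-p))"
  have s0: "s 0 = u0" and sS: "s (Suc k) = s k + s k powr (1-p)" for k by (simp_all add: s_def)
  have sge: "s k \<ge> u0" for k
  proof (induction k)
    case (Suc k) thus ?case by (simp add: sS) (smt (verit) powr_ge_zero)
  qed (simp add: s0)
  have spow: "s k powr p \<ge> c * k" for k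
  proof (induction k)
    case 0 thus ?case by simp
  next
    case (Suc k)
    have "s (Suc k) powr p \<ge> s k powr p + p/2"
      unfolding sS using step_ineq[OF u1[OF sge[of k]] assms(4)] .
    thus ?case using Suc by (simp add: c_def algebra_simps)
  qed
  have sF: "F (s k) \<ge> q ^ k * F u0" for k
  proof (induction k)
    case 0 thus ?case by (simp add: s0)
  next
    case (Suc k)
    have "q ^ Suc k * F u0 = q * (q^k * F u0)" by simp
    also have "\<dots> \<le> q * F (s k)" using Suc q0 by (intro mult_left_mono) auto
    also have "\<dots> \<le> F (s (Suc k))" using Fstep[OF sge[of k]] by (simp add: sS)
    finally show ?case .
  qed
  define K where "K = q * F u0"
  have K0: "K > 0" using q0 Fpos[of u0] by (simp add: K_def)
  have lower: "F u \<ge> K * exp (- (B/2) * u powr p)" if "u \<ge> u0" for u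
  proof -
    have "\<exists>k. u < s k"
    proof -
      obtain k :: nat where k: "u powr p / c < k" using reals_Archimedean2 by blast
      hence "u powr p < c * k" using c0 by (simp add: field_simps)
      hence lt: "u powr p < s k powr p" using spow[of k] by linarith
      have "u \<ge> 0" using u1[OF that] by simp
      have "u < s k"
      proof (rule ccontr)
        assume "\<not> u < s k"
        hence "s k powr p \<le> u powr p" using sge[of k] u1[of "s k"] sge[of k] assms(4)
          by (intro powr_mono2) auto
        thus False using \<open>u powr p < s k powr p\<close> by linarith
      qed
      thus ?thesis by blast
    qed
    moreover have "\<not> u < s 0" using that s0 by simp
    ultimately obtain n where n1: "\<not> u < s n" and n2: "u < s (Suc n)"
      using exists_least_lemma[of "\<lambda>k. u < s k"] by blast
    have "c * n \<le> s n powr p" by (rule spow)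
    also have "\<dots> \<le> u powr p" using n1 sge[of n] u1[of "s n"] sge[of n] assms(4)
      by (intro powr_mono2) auto
    finally have cn: "c * n \<le> u powr p" .
    have "K * exp (- (B/2) * u powr p) \<le> K * exp (- B * c / 2 * n)"
      using K0 cn assms(7) by (intro mult_left_mono) (auto simp: mult_left_mono)
    also have "exp (- B * c / 2 * n) = q ^ n" by (simp add: q_def exp_of_nat_mult[symmetric] mult.commute)
    also have "K * q ^ n = q ^ Suc n * F u0" by (simp add: K_def)
    also have "\<dots> \<le> F (s (Suc n))" by (rule sF)
    also have "\<dots> \<le> F u" using n2 by (intro Fmono) simp
    finally show ?thesis .
  qed
  have lim: "((\<lambda>u::real. exp (- (B/2) * u powr p) / K) \<longlongrightarrow> 0) at_top"
    using assms(4,7) K0 by real_asymp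
  show ?thesis unfolding F_def[symmetric]
  proof (rule tendsto_sandwich[OF _ _ tendsto_const lim])
    show "\<forall>\<^sub>F u in at_top. 0 \<le> exp (- B * u powr p) / F u" by (simp add: F_def)
    show "\<forall>\<^sub>F u in at_top. exp (- B * u powr p) / F u \<le> exp (- (B/2) * u powr p) / K"
      using eventually_ge_at_top[of u0]
    proof eventually_elim
      case (elim u)
      have Fu: "F u > 0" using Fpos elim by auto
      have "exp (- B * u powr p) / F u \<le> exp (- B * u powr p) / (K * exp (- (B/2) * u powr p))"
        using lower[OF elim] K0 Fu by (intro divide_left_mono) auto
      also have "\<dots> = exp (- (B/2) * u powr p) / K"
        using K0 by (simp add: field_simps exp_add[symmetric])
      finally show ?case .
    qed
  qed
qed

end
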